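(* Let $\tilde{\boldsymbol x}\in L^2(\Omega,\mathbb R^m)$, $\tilde{\boldsymbol y}\in L^2(\Omega,\mathbb R^n)$ be zero-mean, and let $\tilde{\boldsymbol v}_1=\tilde{\boldsymbol y},\tilde{\boldsymbol v}_2,\ldots,\tilde{\boldsymbol v}_p\in L^2(\Omega,\mathbb R^n)$ be zero-mean and pairwise orthogonal ($E[\tilde{\boldsymbol v}_i\tilde{\boldsymbol v}_j^T]=\mathbb O$ for $i\neq j$). Let $\eta_1,\ldots,\eta_p$ be nonnegative integers with $\sum\eta_k\le\min\{m,n\}$. For each $k$ let $\beta_{k1}\ge\beta_{k2}\ge\cdots\ge0$ be the singular values of $E_{\tilde x\tilde v_k}(E_{\tilde v_k\tilde v_k}^{1/2})^\dagger$ and $G_{k\eta_k}$ the rank-$\le\eta_k$ truncation of its SVD (keeping the $\eta_k$ largest singular values). Let $\mathcal T_p^*(\tilde{\boldsymbol y})=\sum_{k=1}^pG_{k\eta_k}(E_{\tilde v_k\tilde v_k}^{1/2})^\dagger\tilde{\boldsymbol v}_k$, and let the Karhunen–Loève transform of rank $\eta_1$ be $\mathcal T_{\rm KLT}(\tilde{\boldsymbol y})=G_{1\eta_1}(E_{\tilde y\tilde y}^{1/2})^\dagger\tilde{\boldsymbol y}$ (the case $p=1$). Then $$E\big[\|\tilde{\boldsymbol x}-\mathcal T_p^*(\tilde{\boldsymbol y})\|^2\big]=E\big[\|\tilde{\boldsymbol x}-\mathcal T_{\rm KLT}(\tilde{\boldsymbol y})\|^2\big]-\sum_{k=2}^p\sum_{j=1}^{\eta_k}\beta_{kj}^2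 .$$
   Context: $E[\cdot]$ denotes expectation on a probability space $(\Omega,\Sigma,\mu)$; $E_{gh}:=E[\boldsymbol g\boldsymbol h^T]$ for random vectors $\boldsymbol g,\boldsymbol h$. $M^\dagger$ is the Moore–Penrose pseudo-inverse and $M^{1/2}$ the symmetric PSD square root. For vectors $\|\cdot\|$ is the Euclidean norm, for matrices the Frobenius norm. Matrices act on random vectors pointwise in $\omega$. *)

theory Defs
  imports "HOL-Probability.Probability"
begin

definition cross_cov :: "'a measure \<Rightarrow> ('a \<Rightarrow> real^'m) \<Rightarrow> ('a \<Rightarrow> real^'n) \<Rightarrow> real^'n^'m" where
  "cross_cov M g h = (\<chi> i j. integral\<^sup>L M (\<lambda>\<omega>. g \<omega> $ i * h \<omega> $ j))"

definition outer :: "real^'m \<Rightarrow> real^'n \<Rightarrow> real^'n^'m" where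
  "outer u v = (\<chi> i j. u $ i * v $ j)"

definition psd_mat :: "real^'n^'n \<Rightarrow> bool" where
  "psd_mat A \<longleftrightarrow> transpose A = A \<and> (\<forall>x. 0 \<le> x \<bullet> (A *v x))"

definition msqrt :: "real^'n^'n \<Rightarrow> real^'n^'n" where
  "msqrt A = (THE S. psd_mat S \<and> S ** S = A)"

definition pinv :: "real^'n^'m \<Rightarrow> real^'m^'n" where
  "pinv A = (THE X. A ** X ** A = A \<and> X ** A ** X = X \<and>
      transpose (A ** X) = A ** X \<and> transpose (X ** A) = X ** A)"

text \<open>Singular value decomposition A = sum_{j<q} s_j u_j v_j^T, q = min(m,n),
  with orthonormal u_j, v_j and s_0 >= s_1 >= ... >= 0 (indices start at 0).\<close>
definition is_svd :: "real^'n^'m \<Rightarrow> (nat \<Rightarrow> real) \<Rightarrow> (nat \<Rightarrow> real^'m) \<Rightarrow> (nat \<Rightarrow> real^'n) \<Rightarrow> bool" where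
  "is_svd A s u v \<longleftrightarrow>
     (let q = min CARD('m) CARD('n) in
       (\<forall>i<q. \<forall>j<q. u i \<bullet> u j = (if i = j then 1 else 0)) \<and>
       (\<forall>i<q. \<forall>j<q. v i \<bullet> v j = (if i = j then 1 else 0)) \<and>
       (\<forall>j<q. 0 \<le> s j) \<and>
       (\<forall>i j. i \<le> j \<longrightarrow> j < q \<longrightarrow> s j \<le> s i) \<and>
       A = (\<Sum>j<q. s j *\<^sub>R outer (u j) (v j)))"

definition svd_trunc :: "(nat \<Rightarrow> real) \<Rightarrow> (nat \<Rightarrow> real^'m) \<Rightarrow> (nat \<Rightarrow> real^'n) \<Rightarrow> nat \<Rightarrow> real^'n^'m" where
  "svd_trunc s u v r = (\<Sum>j<r. s j *\<^sub>R outer (u j) (v j))"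

end

theory Submission
  imports Defs
begin

lemma symm_dot:
  fixes A :: "real^'n^'n"
  assumes "transpose A = A"
  shows "(A *v x) \<bullet> y = x \<bullet> (A *v y)"
proof -
  have "(A *v x) \<bullet> y = (transpose A *v x) \<bullet> y" using assms by simp
  also have "\<dots> = (x v* A) \<bullet> y" by simp
  also have "\<dots> = x \<bullet> (A *v y)" by (rule dot_lmul_matrix)
  finally show ?thesis .
qed

lemma quad_zero:
  fixes a c :: real
  assumes "\<And>t. 2 * t * a + t^2 * c \<le> 0"
  shows "a = 0"
proof (rule ccontr)
  assume a: "a \<noteq> 0"
  define d where "d = \<bar>c\<bar> + 1"
  define t where "t = a / d"
  have pos: "d > 0" unfolding d_def by simp
  have "2 * t * a + t^2 * c = a^2 / d^2 * (2 * d + c)"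
    unfolding t_def using pos by (simp add: field_simps power2_eq_square)
  moreover have "a^2 / d^2 > 0" using a pos by simp
  moreover have "2 * d + c > 0" unfolding d_def by (cases "c \<ge> 0") auto
  ultimately have "2 * t * a + t^2 * c > 0" by (metis mult_pos_pos times_divide_eq_left)
  with assms[of t] show False by simp
qed

lemma spectral_aux:
  fixes A :: "real^'n^'n"
  assumes sym: "transpose A = A"
  shows "subspace V \<Longrightarrow> (\<forall>x\<in>V. A *v x \<in> V) \<Longrightarrow>
    \<exists>B. finite B \<and> B \<subseteq> V \<and> (\<forall>b\<in>B. norm b = 1) \<and> pairwise orthogonal B \<and> span B = V \<and>
        (\<forall>b\<in>B. A *v b = (b \<bullet> (A *v b)) *\<^sub>R b)"
proof (induction "dim V" arbitrary: V rule: less_induct)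
  case less
  note sub = less.prems(1) and inv = less.prems(2)
  show ?case
  proof (cases "V = {0}")
    case True
    then show ?thesis by (intro exI[of _ "{}"]) auto
  next
    case False
    then obtain z where z: "z \<in> V" "z \<noteq> 0" using sub subspace_0 by blast
    define K where "K = V \<inter> sphere 0 1"
    have "closed V" using sub by (simp add: closed_subspace)
    then have cK: "compact K" unfolding K_def by (simp add: closed_Int_compact)
    have "z /\<^sub>R norm z \<in> K" unfolding K_def using z sub by (simp add: subspace_scale)
    then have neK: "K \<noteq> {}" by blast
    have "continuous_on K (\<lambda>x. x \<bullet> (A *v x))"
      by (intro continuous_intros continuous_on_compose2[of UNIV "(*v) A"]) 
         (auto intro: linear_continuous_on matrix_vector_mul_linear)
    then obtain e where eK: "e \<in> K" and emax: "\<And>y. y \<in> K \<Longrightarrow> y \<bullet> (A *v y) \<le> e \<bullet> (A *v e)"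
      using continuous_attains_sup[OF cK neK] by blast
    define lam where "lam = e \<bullet> (A *v e)"
    have eV: "e \<in> V" and ne: "norm e = 1" using eK unfolding K_def by auto
    have ee: "e \<bullet> e = 1" using ne by (simp add: norm_eq_1)
    have orth: "h \<bullet> (A *v e) = 0" if hV: "h \<in> V" and he: "h \<bullet> e = 0" for h
    proof (rule quad_zero)
      fix t :: real
      define g where "g = e + t *\<^sub>R h"
      have gV: "g \<in> V" unfolding g_def using sub eV hV by (simp add: subspace_add subspace_scale)
      have gg: "g \<bullet> g = 1 + t^2 * (h \<bullet> h)"
        unfolding g_def using ee he by (simp add: algebra_simps inner_commute power2_eq_square)
      have gpos: "g \<bullet> g > 0" unfolding gg by (simp add: add_pos_nonneg)
      then have "g \<noteq> 0" by auto
      then have "g /\<^sub>R norm g \<in> K" unfolding K_def using gV sub by (simp add: subspace_scale)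
      from emax[OF this] have "(g /\<^sub>R norm g) \<bullet> (A *v (g /\<^sub>R norm g)) \<le> lam" unfolding lam_def .
      then have "(g \<bullet> (A *v g)) / (norm g)^2 \<le> lam"
        by (simp add: matrix_vector_mult_scaleR power2_eq_square divide_inverse mult.commute mult.left_commute)
      moreover have "(norm g)^2 = g \<bullet> g" by (simp add: power2_norm_eq_inner)
      ultimately have le: "g \<bullet> (A *v g) \<le> lam * (g \<bullet> g)" using gpos by (simp add: divide_le_eq)
      have "e \<bullet> (A *v h) = h \<bullet> (A *v e)"
        using symm_dot[OF sym, of h e] by (simp add: inner_commute)
      then have "g \<bullet> (A *v g) = lam + 2 * t * (h \<bullet> (A *v e)) + t^2 * (h \<bullet> (A *v h))"
        unfolding g_def lam_def by (simp add: algebra_simps matrix_vector_mult_scaleR inner_commute power2_eq_square)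
      with le gg show "2 * t * (h \<bullet> (A *v e)) + t^2 * (h \<bullet> (A *v h) - lam * (h \<bullet> h)) \<le> 0"
        by (simp add: algebra_simps)
    qed
    define r where "r = A *v e - lam *\<^sub>R e"
    have rV: "r \<in> V" unfolding r_def using inv eV sub by (simp add: subspace_diff subspace_scale)
    have re: "r \<bullet> e = 0" unfolding r_def lam_def using ee by (simp add: algebra_simps inner_commute)
    have "r \<bullet> r = r \<bullet> (A *v e) - lam * (r \<bullet> e)" unfolding r_def by (simp add: algebra_simps inner_commute)
    also have "\<dots> = 0" using orth[OF rV re] re by simp
    finally have "r = 0" by simp
    then have eig: "A *v e = lam *\<^sub>R e" unfolding r_def by simp
    define V' where "V' = V \<inter> {x. e \<bullet> x = 0}"
    have "subspace {x. e \<bullet> x = 0}" by (simp add: subspace_def inner_add_right)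
    then have sub': "subspace V'" unfolding V'_def
      using sub by (simp add: subspace_inter)
    have inv': "\<forall>x\<in>V'. A *v x \<in> V'"
    proof
      fix x assume "x \<in> V'"
      then have "x \<in> V" "e \<bullet> x = 0" unfolding V'_def by auto
      moreover have "e \<bullet> (A *v x) = (A *v e) \<bullet> x" using symm_dot[OF sym] by simp
      ultimately show "A *v x \<in> V'" unfolding V'_def using inv eig by simp
    qed
    have "span V' \<subset> span V"
    proof -
      have "V' \<subseteq> V" unfolding V'_def by auto
      moreover have "e \<notin> V'" unfolding V'_def using ee by auto
      ultimately have "V' \<subset> V" using eV by blast
      then show ?thesis using sub sub' by (metis span_eq_iff)
    qed
    then have "dim V' < dim V" by (rule dim_psubset)
    from less.hyps[OF this sub' inv'] obtain B' where B':
      "finite B'" "B' \<subseteq> V'" "\<forall>b\<in>B'. norm b = 1" "pairwise orthogonal B'" "span B' = V'"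
      "\<forall>b\<in>B'. A *v b = (b \<bullet> (A *v b)) *\<^sub>R b" by blast
    show ?thesis
    proof (intro exI[of _ "insert e B'"] conjI)
      show "finite (insert e B')" using B' by simp
      show "insert e B' \<subseteq> V" using B' eV unfolding V'_def by auto
      show "\<forall>b\<in>insert e B'. norm b = 1" using B' ne by auto
      have eb: "e \<bullet> b = 0" if "b \<in> B'" for b using B'(2) that unfolding V'_def by auto
      show "pairwise orthogonal (insert e B')"
        using B'(4) eb unfolding pairwise_insert orthogonal_def by (auto simp: inner_commute)
      show "\<forall>b\<in>insert e B'. A *v b = (b \<bullet> (A *v b)) *\<^sub>R b" using B' eig lam_def by auto
      show "span (insert e B') = V"
      proof
        show "span (insert e B') \<subseteq> V" using B' eV sub unfolding V'_def
          by (metis (no_types, lifting) insert_subset inf_le1 order_trans span_mono span_eq_iff)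
        show "V \<subseteq> span (insert e B')"
        proof
          fix x assume xV: "x \<in> V"
          have "x - (e \<bullet> x) *\<^sub>R e \<in> V'" unfolding V'_def using xV eV sub ee
            by (simp add: subspace_diff subspace_scale algebra_simps)
          then show "x \<in> span (insert e B')" using B'(5) span_breakdown_eq by blast
        qed
      qed
    qed
  qed
qed

definition orthonormal_set :: "(real^'n) set \<Rightarrow> bool" where
  "orthonormal_set B \<longleftrightarrow> finite B \<and> (\<forall>b\<in>B. \<forall>c\<in>B. b \<bullet> c = (if b = c then 1 else 0))"

definition Dm :: "(real^'n) set \<Rightarrow> (real^'n \<Rightarrow> real) \<Rightarrow> real^'n^'n" where
  "Dm B f = (\<Sum>b\<in>B. f b *\<^sub>R outer b b)"

lemma outer_mult_vec: "outer a b *v x = (b \<bullet> x) *\<^sub>R a"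
  by (simp add: vec_eq_iff outer_def matrix_vector_mult_def inner_vec_def sum_distrib_left mult.commute mult.left_commute)

lemma outer_mult: "outer a b ** outer c d = (b \<bullet> c) *\<^sub>R outer a d"
  by (simp add: vec_eq_iff outer_def matrix_matrix_mult_def inner_vec_def sum_distrib_left sum_distrib_right mult.commute mult.left_commute)

lemma transpose_outer: "transpose (outer a b) = outer b a"
  by (simp add: vec_eq_iff outer_def transpose_def)

lemma sum_mat_vec: "(sum f S) *v x = (\<Sum>i\<in>S. f i *v x)"
  for f :: "'i \<Rightarrow> real^'n^'m"
  by (induction S rule: infinite_finite_induct) (auto simp: matrix_vector_mult_add_rdistrib)

lemma scaleR_mat_vec: "(c *\<^sub>R A) *v x = c *\<^sub>R (A *v x)"
  for A :: "real^'n^'m"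
  by (simp add: vec_eq_iff matrix_vector_mult_def sum_distrib_left mult.assoc)

lemma scaleR_mat_mult: "(c *\<^sub>R A) ** B = c *\<^sub>R (A ** B)"
  for A :: "real^'n^'m" and B :: "real^'k^'n"
  by (simp add: vec_eq_iff matrix_matrix_mult_def sum_distrib_left mult.assoc)

lemma mat_mult_scaleR: "A ** (c *\<^sub>R B) = c *\<^sub>R (A ** B)"
  for A :: "real^'n^'m" and B :: "real^'k^'n"
  by (simp add: vec_eq_iff matrix_matrix_mult_def sum_distrib_left mult.assoc mult.left_commute)

lemma sum_mat_mult: "(sum f S) ** B = (\<Sum>i\<in>S. f i ** B)"
  for f :: "'i \<Rightarrow> real^'n^'m" and B :: "real^'k^'n"
  by (induction S rule: infinite_finite_induct) (auto simp: vec_eq_iff matrix_matrix_mult_def sum.distrib distrib_right)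

lemma mat_mult_sum: "B ** (sum f S) = (\<Sum>i\<in>S. B ** f i)"
  for f :: "'i \<Rightarrow> real^'k^'n" and B :: "real^'n^'m"
  by (induction S rule: infinite_finite_induct) (auto simp: matrix_add_ldistrib)

lemma transpose_sum: "transpose (sum f S) = (\<Sum>i\<in>S. transpose (f i))"
  for f :: "'i \<Rightarrow> real^'k^'n"
  by (induction S rule: infinite_finite_induct) (auto simp: transpose_def vec_eq_iff)

lemma transpose_Dm: "transpose (Dm B f) = Dm B f"
  unfolding Dm_def transpose_sum by (simp add: transpose_scalar transpose_outer)

lemma Dm_mult:
  assumes "orthonormal_set B"
  shows "Dm B f ** Dm B g = Dm B (\<lambda>b. f b * g b)"
proof -
  have fin: "finite B" using assms unfolding orthonormal_set_def by auto
  have "Dm B f ** Dm B g = (\<Sum>b\<in>B. \<Sum>c\<in>B. (f b * g c * (b \<bullet> c)) *\<^sub>R outer b c)"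
    unfolding Dm_def sum_mat_mult mat_mult_sum scaleR_mat_mult mat_mult_scaleR outer_mult
    by (subst sum.swap) (simp add: scaleR_sum_right mult_ac inner_commute)
  also have "\<dots> = (\<Sum>b\<in>B. (f b * g b) *\<^sub>R outer b b)"
  proof (rule sum.cong[OF refl])
    fix b assume bB: "b \<in> B"
    have "(\<Sum>c\<in>B. (f b * g c * (b \<bullet> c)) *\<^sub>R outer b c) = (\<Sum>c\<in>B. if c = b then (f b * g b) *\<^sub>R outer b b else 0)"
      using assms bB unfolding orthonormal_set_def by (intro sum.cong) auto
    also have "\<dots> = (f b * g b) *\<^sub>R outer b b" using fin bB by (simp add: sum.delta')
    finally show "(\<Sum>c\<in>B. (f b * g c * (b \<bullet> c)) *\<^sub>R outer b c) = (f b * g b) *\<^sub>R outer b b" .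
  qed
  finally show ?thesis unfolding Dm_def .
qed

lemma Dm_quad: "x \<bullet> (Dm B f *v x) = (\<Sum>b\<in>B. f b * (b \<bullet> x)^2)"
  unfolding Dm_def sum_mat_vec scaleR_mat_vec outer_mult_vec
  by (simp add: inner_sum_right power2_eq_square inner_commute mult.assoc)

lemma Dm_vec: "Dm B f *v x = (\<Sum>b\<in>B. (f b * (b \<bullet> x)) *\<^sub>R b)"
  unfolding Dm_def sum_mat_vec scaleR_mat_vec outer_mult_vec by simp

lemma spectral:
  fixes A :: "real^'n^'n"
  assumes sym: "transpose A = A"
  shows "\<exists>B. orthonormal_set B \<and> A = Dm B (\<lambda>b. b \<bullet> (A *v b))"
proof -
  obtain B where B: "finite B" "\<forall>b\<in>B. norm b = 1" "pairwise orthogonal B" "span B = UNIV"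
      "\<forall>b\<in>B. A *v b = (b \<bullet> (A *v b)) *\<^sub>R b"
    using spectral_aux[OF sym, of UNIV] by auto
  have on: "orthonormal_set B" unfolding orthonormal_set_def
  proof (intro conjI ballI)
    fix b c assume "b \<in> B" "c \<in> B"
    then show "b \<bullet> c = (if b = c then 1 else 0)"
      using B(2,3) unfolding pairwise_def orthogonal_def by (auto simp: norm_eq_1)
  qed (use B in auto)
  have expand: "x = (\<Sum>b\<in>B. (b \<bullet> x) *\<^sub>R b)" for x
  proof -
    define y where "y = x - (\<Sum>b\<in>B. (b \<bullet> x) *\<^sub>R b)"
    have "c \<bullet> y = 0" if cB: "c \<in> B" for c
    proof -
      have "c \<bullet> (\<Sum>b\<in>B. (b \<bullet> x) *\<^sub>R b) = (\<Sum>b\<in>B. if b = c then c \<bullet> x else 0)"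
        unfolding inner_sum_right using on cB unfolding orthonormal_set_def
        by (intro sum.cong) (auto simp: inner_commute)
      also have "\<dots> = c \<bullet> x" using B(1) cB by (simp add: sum.delta)
      finally show ?thesis unfolding y_def by (simp add: inner_diff_right)
    qed
    then have "\<forall>c\<in>B. orthogonal y c" by (simp add: orthogonal_def inner_commute)
    then have "orthogonal y y" using B(4) by (metis UNIV_I orthogonal_to_span)
    then have "y = 0" by (simp add: orthogonal_def)
    then show ?thesis unfolding y_def by simp
  qed
  have "A = Dm B (\<lambda>b. b \<bullet> (A *v b))"
  proof (subst matrix_eq, intro allI)
    fix x
    have "A *v x = A *v (\<Sum>b\<in>B. (b \<bullet> x) *\<^sub>R b)" using expand[of x] by simp
    also have "\<dots> = (\<Sum>b\<in>B. (b \<bullet> x) *\<^sub>R (A *v b))"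
      by (simp add: linear_sum[OF matrix_vector_mul_linear] matrix_vector_mult_scaleR)
    also have "\<dots> = Dm B (\<lambda>b. b \<bullet> (A *v b)) *v x"
      unfolding Dm_vec
    proof (intro sum.cong refl)
      fix b assume "b \<in> B"
      then have e: "A *v b = (b \<bullet> (A *v b)) *\<^sub>R b" using B(5) by blast
      show "(b \<bullet> x) *\<^sub>R (A *v b) = (b \<bullet> (A *v b) * (b \<bullet> x)) *\<^sub>R b"
        by (subst e) (simp add: mult.commute)
    qed
    finally show "A *v x = Dm B (\<lambda>b. b \<bullet> (A *v b)) *v x" .
  qed
  with on show ?thesis by blast
qed

lemma Dm_eigen:
  assumes "orthonormal_set B" "b \<in> B"
  shows "Dm B f *v b = f b *\<^sub>R b"
proof -
  have "Dm B f *v b = (\<Sum>c\<in>B. if c = b then f b *\<^sub>R b else 0)"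
    unfolding Dm_vec using assms unfolding orthonormal_set_def by (intro sum.cong) auto
  also have "\<dots> = f b *\<^sub>R b" using assms unfolding orthonormal_set_def by (simp add: sum.delta')
  finally show ?thesis .
qed

lemma Dm_cong: "(\<And>b. b \<in> B \<Longrightarrow> f b = g b) \<Longrightarrow> Dm B f = Dm B g"
  unfolding Dm_def by (intro sum.cong) auto

lemma psd_zero:
  fixes S :: "real^'n^'n"
  assumes "psd_mat S" "x \<bullet> (S *v x) = 0"
  shows "S *v x = 0"
proof -
  have sym: "transpose S = S" using assms unfolding psd_mat_def by auto
  have "y \<bullet> (S *v x) = 0" for y
  proof -
    have "- (y \<bullet> (S *v x)) = 0"
    proof (rule quad_zero)
      fix t :: real
      have "0 \<le> (x + t *\<^sub>R y) \<bullet> (S *v (x + t *\<^sub>R y))" using assms unfolding psd_mat_def by blast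
      moreover have "x \<bullet> (S *v y) = y \<bullet> (S *v x)" using symm_dot[OF sym, of y x] by (simp add: inner_commute)
      ultimately have "0 \<le> 2 * t * (y \<bullet> (S *v x)) + t^2 * (y \<bullet> (S *v y))"
        using assms(2) by (simp add: algebra_simps matrix_vector_mult_scaleR power2_eq_square inner_commute)
      then show "2 * t * - (y \<bullet> (S *v x)) + t\<^sup>2 * - (y \<bullet> (S *v y)) \<le> 0" by simp
    qed
    then show ?thesis by simp
  qed
  from this[of "S *v x"] show ?thesis by simp
qed

lemma transpose_diff: "transpose (A - B) = transpose A - transpose B"
  for A B :: "real^'n^'m"
  by (simp add: transpose_def vec_eq_iff)

lemma psd_sqrt_unique:
  fixes S T :: "real^'n^'n"
  assumes S: "psd_mat S" and T: "psd_mat T" and eq: "S ** S = T ** T"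
  shows "S = T"
proof -
  have sS: "transpose S = S" and sT: "transpose T = T" using S T unfolding psd_mat_def by auto
  define D where "D = S - T"
  have sD: "transpose D = D" unfolding D_def transpose_diff sS sT ..
  obtain B where on: "orthonormal_set B" and DB: "D = Dm B (\<lambda>b. b \<bullet> (D *v b))"
    using spectral[OF sD] by blast
  have zero: "b \<bullet> (D *v b) = 0" if bB: "b \<in> B" for b
  proof (rule ccontr)
    define \<mu> where "\<mu> = b \<bullet> (D *v b)"
    assume "b \<bullet> (D *v b) \<noteq> 0"
    then have mu: "\<mu> \<noteq> 0" unfolding \<mu>_def .
    have Db: "D *v b = \<mu> *\<^sub>R b" using Dm_eigen[OF on bB, of "\<lambda>b. b \<bullet> (D *v b)"] DB
      unfolding \<mu>_def by metis
    have "0 = b \<bullet> ((S ** S) *v b) - b \<bullet> ((T ** T) *v b)" using eq by simp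
    also have "\<dots> = b \<bullet> (S *v (D *v b)) + b \<bullet> (D *v (T *v b))"
      unfolding D_def
      by (simp add: matrix_vector_mul_assoc[symmetric] matrix_vector_mult_diff_rdistrib
          matrix_vector_mult_diff_distrib inner_diff_right)
    also have "\<dots> = b \<bullet> (S *v (D *v b)) + (D *v b) \<bullet> (T *v b)" using symm_dot[OF sD] by simp
    also have "\<dots> = \<mu> * (b \<bullet> (S *v b) + b \<bullet> (T *v b))"
      unfolding Db by (simp add: matrix_vector_mult_scaleR algebra_simps)
    finally have "b \<bullet> (S *v b) + b \<bullet> (T *v b) = 0" using mu by simp
    moreover have "0 \<le> b \<bullet> (S *v b)" "0 \<le> b \<bullet> (T *v b)" using S T unfolding psd_mat_def by auto
    ultimately have "b \<bullet> (S *v b) = 0" "b \<bullet> (T *v b) = 0" by linarith+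
    then have "S *v b = 0" "T *v b = 0" using psd_zero S T by blast+
    then have "\<mu> *\<^sub>R b = 0" using Db unfolding D_def by (simp add: matrix_vector_mult_diff_rdistrib)
    moreover have "b \<noteq> 0" using on bB unfolding orthonormal_set_def by fastforce
    ultimately show False using mu by simp
  qed
  have "D = Dm B (\<lambda>b. 0)" using DB Dm_cong[of B "\<lambda>b. b \<bullet> (D *v b)" "\<lambda>b. 0"] zero by metis
  also have "\<dots> = 0" unfolding Dm_def by simp
  finally show ?thesis unfolding D_def by simp
qed

lemma msqrt_props:
  fixes A :: "real^'n^'n"
  assumes A: "psd_mat A"
  shows "psd_mat (msqrt A) \<and> msqrt A ** msqrt A = A"
proof -
  have sA: "transpose A = A" using A unfolding psd_mat_def by auto
  obtain B where on: "orthonormal_set B" and AB: "A = Dm B (\<lambda>b. b \<bullet> (A *v b))"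
    using spectral[OF sA] by blast
  define S where "S = Dm B (\<lambda>b. sqrt (b \<bullet> (A *v b)))"
  have nn: "0 \<le> b \<bullet> (A *v b)" for b using A unfolding psd_mat_def by auto
  have pS: "psd_mat S" unfolding psd_mat_def S_def
    by (auto simp: transpose_Dm Dm_quad nn intro!: sum_nonneg mult_nonneg_nonneg)
  have "S ** S = Dm B (\<lambda>b. sqrt (b \<bullet> (A *v b)) * sqrt (b \<bullet> (A *v b)))"
    unfolding S_def by (rule Dm_mult[OF on])
  also have "\<dots> = A" using nn AB by simp
  finally have SS: "S ** S = A" .
  have "\<exists>!S. psd_mat S \<and> S ** S = A"
    using pS SS psd_sqrt_unique by blast
  then show ?thesis unfolding msqrt_def by (rule theI')
qed

definition penrose :: "real^'n^'m \<Rightarrow> real^'m^'n \<Rightarrow> bool" where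
  "penrose A X \<longleftrightarrow> A ** X ** A = A \<and> X ** A ** X = X \<and>
      transpose (A ** X) = A ** X \<and> transpose (X ** A) = X ** A"

lemma penrose_unique:
  assumes X: "penrose A X" and Y: "penrose A Y"
  shows "X = Y"
proof -
  have X1: "A ** X ** A = A" and X2: "X ** A ** X = X" and X3: "transpose (A ** X) = A ** X"
    and X4: "transpose (X ** A) = X ** A" using X unfolding penrose_def by auto
  have Y1: "A ** Y ** A = A" and Y2: "Y ** A ** Y = Y" and Y3: "transpose (A ** Y) = A ** Y"
    and Y4: "transpose (Y ** A) = Y ** A" using Y unfolding penrose_def by auto
  have "X = X ** (A ** X)" using X2 by (simp add: matrix_mul_assoc)
  also have "\<dots> = X ** transpose X ** transpose A" using X3
    by (metis matrix_mul_assoc matrix_transpose_mul)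
  also have "\<dots> = X ** transpose X ** transpose (A ** Y ** A)" using Y1 by simp
  also have "\<dots> = X ** (transpose (A ** X)) ** (transpose (A ** Y))"
    by (simp add: matrix_transpose_mul matrix_mul_assoc)
  also have "\<dots> = X ** (A ** X) ** (A ** Y)" using X3 Y3 by simp
  also have "\<dots> = X ** A ** Y" using X2 by (simp add: matrix_mul_assoc)
  finally have 1: "X = X ** A ** Y" .
  have "Y = (Y ** A) ** Y" using Y2 by simp
  also have "\<dots> = transpose A ** transpose Y ** Y" using Y4
    by (metis matrix_transpose_mul)
  also have "\<dots> = transpose (A ** X ** A) ** transpose Y ** Y" using X1 by simp
  also have "\<dots> = (transpose (X ** A)) ** (transpose (Y ** A)) ** Y"
    by (simp add: matrix_transpose_mul matrix_mul_assoc)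
  also have "\<dots> = (X ** A) ** (Y ** A) ** Y" using X4 Y4 by simp
  also have "\<dots> = X ** A ** Y" using Y2 by (metis matrix_mul_assoc)
  finally show ?thesis using 1 by simp
qed

lemma pinv_sym:
  fixes S :: "real^'n^'n"
  assumes sS: "transpose S = S"
  shows "penrose S (pinv S) \<and> transpose (pinv S) = pinv S"
proof -
  obtain B where on: "orthonormal_set B" and SB: "S = Dm B (\<lambda>b. b \<bullet> (S *v b))"
    using spectral[OF sS] by blast
  define X where "X = Dm B (\<lambda>b. inverse (b \<bullet> (S *v b)))"
  have e1: "a * inverse a * a = a" for a :: real by (cases "a = 0") auto
  have e2: "inverse a * a * inverse a = inverse a" for a :: real by (cases "a = 0") auto
  define \<mu> where "\<mu> = (\<lambda>b. b \<bullet> (S *v b))"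
  have m1: "Dm B \<mu> ** Dm B (\<lambda>b. inverse (\<mu> b)) ** Dm B \<mu> = Dm B \<mu>"
    unfolding Dm_mult[OF on] by (simp only: e1)
  have m2: "Dm B (\<lambda>b. inverse (\<mu> b)) ** Dm B \<mu> ** Dm B (\<lambda>b. inverse (\<mu> b)) = Dm B (\<lambda>b. inverse (\<mu> b))"
    unfolding Dm_mult[OF on] by (simp only: e2)
  have "penrose (Dm B \<mu>) (Dm B (\<lambda>b. inverse (\<mu> b)))" unfolding penrose_def
    using m1 m2 by (simp add: Dm_mult[OF on] transpose_Dm)
  then have "penrose S X" using SB unfolding X_def \<mu>_def by simp
  then have ex: "\<exists>!X. penrose S X" using penrose_unique by blast
  have pp: "penrose S (pinv S)" using theI'[OF ex] unfolding pinv_def penrose_def .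
  have "penrose S (transpose (pinv S))" using pp sS unfolding penrose_def
    by (metis matrix_transpose_mul matrix_mul_assoc transpose_transpose)
  then have "transpose (pinv S) = pinv S" using pp penrose_unique by blast
  with pp show ?thesis by blast
qed

definition frob :: "real^'n^'m \<Rightarrow> real^'n^'m \<Rightarrow> real" where
  "frob X Y = (\<Sum>i\<in>UNIV. \<Sum>j\<in>UNIV. X$i$j * Y$i$j)"

lemma frob_transpose: "frob (transpose X) (transpose Y) = frob X Y"
  unfolding frob_def transpose_def by (simp, rule sum.swap)

lemma frob_mult1: "frob (X ** Y) Z = frob X (Z ** transpose Y)"
proof -
  have "frob (X ** Y) Z = (\<Sum>i\<in>UNIV. \<Sum>j\<in>UNIV. \<Sum>l\<in>UNIV. X$i$l * Y$l$j * Z$i$j)"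
    unfolding frob_def matrix_matrix_mult_def by (simp add: sum_distrib_right)
  also have "\<dots> = (\<Sum>i\<in>UNIV. \<Sum>l\<in>UNIV. \<Sum>j\<in>UNIV. X$i$l * Y$l$j * Z$i$j)"
    by (rule sum.cong[OF refl], rule sum.swap)
  also have "\<dots> = frob X (Z ** transpose Y)"
    unfolding frob_def matrix_matrix_mult_def transpose_def by (simp add: sum_distrib_left mult_ac)
  finally show ?thesis .
qed

lemma frob_mult2: "frob (X ** Y) Z = frob Y (transpose X ** Z)"
proof -
  have "frob (X ** Y) Z = frob (transpose Y ** transpose X) (transpose Z)"
    by (metis frob_transpose matrix_transpose_mul)
  also have "\<dots> = frob (transpose Y) (transpose Z ** X)" by (simp add: frob_mult1)
  also have "\<dots> = frob (transpose Y) (transpose (transpose X ** Z))" by (simp add: matrix_transpose_mul)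
  also have "\<dots> = frob Y (transpose X ** Z)" by (rule frob_transpose)
  finally show ?thesis .
qed

lemma frob_outer: "frob (outer a b) Z = a \<bullet> (Z *v b)"
  unfolding frob_def outer_def matrix_vector_mult_def inner_vec_def
  by (simp add: sum_distrib_left mult_ac)

lemma frob_sum: "frob (sum f S) Z = (\<Sum>i\<in>S. frob (f i) Z)"
  by (induction S rule: infinite_finite_induct) (auto simp: frob_def sum.distrib distrib_right)

lemma frob_scale: "frob (c *\<^sub>R X) Z = c * frob X Z"
  by (simp add: frob_def sum_distrib_left mult.assoc)

lemma frob_zero2 [simp]: "frob X 0 = 0"
  by (simp add: frob_def)

lemma svd_facts:
  fixes A :: "real^'n^'m"
  assumes "is_svd A s u w"
  shows "\<And>i j. i < min CARD('m) CARD('n) \<Longrightarrow> j < min CARD('m) CARD('n) \<Longrightarrow> u i \<bullet> u j = (if i = j then 1 else 0)"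
    and "\<And>i j. i < min CARD('m) CARD('n) \<Longrightarrow> j < min CARD('m) CARD('n) \<Longrightarrow> w i \<bullet> w j = (if i = j then 1 else 0)"
    and "A = svd_trunc s u w (min CARD('m) CARD('n))"
  using assms unfolding is_svd_def svd_trunc_def Let_def by auto

lemma trunc_vec:
  fixes A :: "real^'n^'m"
  assumes svd: "is_svd A s u w" and r: "r \<le> min CARD('m) CARD('n)" and j: "j < r"
  shows "svd_trunc s u w r *v w j = s j *\<^sub>R u j"
proof -
  have "svd_trunc s u w r *v w j = (\<Sum>i<r. if i = j then s j *\<^sub>R u j else 0)"
    unfolding svd_trunc_def sum_mat_vec scaleR_mat_vec outer_mult_vec
    using svd_facts(2)[OF svd] r j by (intro sum.cong) auto
  also have "\<dots> = s j *\<^sub>R u j" using j by (simp add: sum.delta')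
  finally show ?thesis .
qed

lemma frob_trunc:
  fixes A :: "real^'n^'m" and X :: "real^'n^'m"
  assumes svd: "is_svd A s u w" and r: "r \<le> min CARD('m) CARD('n)"
    and X: "\<And>j. j < r \<Longrightarrow> X *v w j = s j *\<^sub>R u j"
  shows "frob (svd_trunc s u w r) X = (\<Sum>j<r. (s j)^2)"
  unfolding svd_trunc_def frob_sum frob_scale frob_outer
proof (intro sum.cong refl)
  fix j assume "j \<in> {..<r}"
  then have "j < r" by simp
  then show "s j * (u j \<bullet> (X *v w j)) = (s j)^2"
    using X svd_facts(1)[OF svd] r by (simp add: power2_eq_square)
qed

lemma proj_trunc:
  fixes A :: "real^'n^'m"
  assumes svd: "is_svd A s u w" and r: "r \<le> min CARD('m) CARD('n)"
  shows "(\<Sum>j<r. outer (u j) (u j)) ** A = svd_trunc s u w r"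
proof -
  let ?q = "min CARD('m) CARD('n)"
  have "(\<Sum>j<r. outer (u j) (u j)) ** A = (\<Sum>j<r. \<Sum>i<?q. (s i * (u j \<bullet> u i)) *\<^sub>R outer (u j) (w i))"
    by (subst svd_facts(3)[OF svd]) (simp add: svd_trunc_def sum_mat_mult mat_mult_sum mat_mult_scaleR outer_mult scaleR_sum_right, subst sum.swap, simp add: mult_ac)
  also have "\<dots> = (\<Sum>j<r. s j *\<^sub>R outer (u j) (w j))"
  proof (intro sum.cong refl)
    fix j assume "j \<in> {..<r}"
    then have j: "j < ?q" using r by simp
    have "(\<Sum>i<?q. (s i * (u j \<bullet> u i)) *\<^sub>R outer (u j) (w i)) = (\<Sum>i<?q. if i = j then s j *\<^sub>R outer (u j) (w j) else 0)"
      using svd_facts(1)[OF svd] j by (intro sum.cong) auto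
    also have "\<dots> = s j *\<^sub>R outer (u j) (w j)" using j by (simp add: sum.delta')
    finally show "(\<Sum>i<?q. (s i * (u j \<bullet> u i)) *\<^sub>R outer (u j) (w i)) = s j *\<^sub>R outer (u j) (w j)" .
  qed
  finally show ?thesis unfolding svd_trunc_def .
qed

lemma key:
  fixes C :: "real^'n^'m" and E :: "real^'n^'n"
  assumes E: "psd_mat E"
    and svd: "is_svd (C ** pinv (msqrt E)) s u w"
    and r: "r \<le> min CARD('m) CARD('n)"
  shows "frob (svd_trunc s u w r ** pinv (msqrt E)) C = (\<Sum>j<r. (s j)^2)"
    and "frob (transpose (svd_trunc s u w r ** pinv (msqrt E)) ** (svd_trunc s u w r ** pinv (msqrt E))) E
         = (\<Sum>j<r. (s j)^2)"
proof -
  define S where "S = msqrt E"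
  define P where "P = pinv S"
  define A where "A = C ** P"
  define G where "G = svd_trunc s u w r"
  have S: "psd_mat S" "S ** S = E" using msqrt_props[OF E] unfolding S_def by auto
  have sS: "transpose S = S" using S unfolding psd_mat_def by auto
  have pen: "penrose S P" and sP: "transpose P = P" using pinv_sym[OF sS] unfolding P_def by auto
  have svdA: "is_svd A s u w" using svd unfolding A_def P_def S_def .
  have "frob (G ** P) C = frob G A" unfolding A_def frob_mult1 sP ..
  also have "\<dots> = (\<Sum>j<r. (s j)^2)" unfolding G_def
    by (rule frob_trunc[OF svdA r]) (use trunc_vec[OF svdA order_refl] svd_facts(3)[OF svdA] r in auto)
  finally show "frob (svd_trunc s u w r ** pinv (msqrt E)) C = (\<Sum>j<r. (s j)^2)"
    unfolding G_def P_def S_def .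
  have SP: "S ** P = P ** S" using pen sS sP unfolding penrose_def by (metis matrix_transpose_mul)
  have PSP: "P ** S ** P = P" using pen unfolding penrose_def by auto
  have PEP: "P ** E ** P = P ** S"
  proof -
    have "P ** E ** P = P ** S ** (S ** P)" by (simp add: S(2)[symmetric] matrix_mul_assoc)
    also have "\<dots> = (P ** S ** P) ** S" using SP by (simp add: matrix_mul_assoc)
    finally show ?thesis using PSP by simp
  qed
  have APEP: "A ** (P ** E ** P) = A"
  proof -
    have "A ** (P ** E ** P) = C ** (P ** (P ** S))" unfolding PEP A_def by (simp add: matrix_mul_assoc)
    also have "\<dots> = C ** (P ** S ** P)" using SP by (metis matrix_mul_assoc)
    finally show ?thesis using PSP unfolding A_def by simp
  qed
  have GQ: "G ** (P ** E ** P) = G"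
  proof -
    have "G = (\<Sum>j<r. outer (u j) (u j)) ** A" unfolding G_def using proj_trunc[OF svdA r] by simp
    then show ?thesis using APEP by (metis matrix_mul_assoc)
  qed
  have "frob (transpose (G ** P) ** (G ** P)) E = frob (G ** P) (G ** P ** E)"
    by (simp add: frob_mult2)
  also have "\<dots> = frob G (G ** (P ** E ** P))"
    by (simp add: frob_mult1 sP matrix_mul_assoc)
  also have "\<dots> = frob G G" unfolding GQ ..
  also have "\<dots> = (\<Sum>j<r. (s j)^2)" unfolding G_def
    by (rule frob_trunc[OF svdA r]) (use trunc_vec[OF svdA r] in auto)
  finally show "frob (transpose (svd_trunc s u w r ** pinv (msqrt E)) ** (svd_trunc s u w r ** pinv (msqrt E))) E
         = (\<Sum>j<r. (s j)^2)" unfolding G_def P_def S_def .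
qed

lemma comp_meas:
  fixes f :: "'a \<Rightarrow> real^'m"
  assumes "f \<in> borel_measurable M"
  shows "(\<lambda>\<omega>. f \<omega> $ i) \<in> borel_measurable M"
  using measurable_compose[OF assms borel_measurable_nth] by (simp add: comp_def)

lemma comp_int:
  fixes f :: "'a \<Rightarrow> real^'m" and g :: "'a \<Rightarrow> real^'n"
  assumes fm: "f \<in> borel_measurable M" and fi: "integrable M (\<lambda>\<omega>. (norm (f \<omega>))\<^sup>2)"
    and gm: "g \<in> borel_measurable M" and gi: "integrable M (\<lambda>\<omega>. (norm (g \<omega>))\<^sup>2)"
  shows "integrable M (\<lambda>\<omega>. f \<omega> $ i * g \<omega> $ j)"
proof (rule Bochner_Integration.integrable_bound)
  show "integrable M (\<lambda>\<omega>. (norm (f \<omega>))\<^sup>2 + (norm (g \<omega>))\<^sup>2)" using fi gi by simp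
  show "(\<lambda>\<omega>. f \<omega> $ i * g \<omega> $ j) \<in> borel_measurable M"
    using comp_meas[OF fm] comp_meas[OF gm] by (rule borel_measurable_times)
  show "AE \<omega> in M. norm (f \<omega> $ i * g \<omega> $ j) \<le> norm ((norm (f \<omega>))\<^sup>2 + (norm (g \<omega>))\<^sup>2)"
  proof (rule AE_I2)
    fix \<omega>
    have a: "\<bar>f \<omega> $ i\<bar> \<le> norm (f \<omega>)" "\<bar>g \<omega> $ j\<bar> \<le> norm (g \<omega>)" by (rule component_le_norm_cart)+
    have "\<bar>f \<omega> $ i * g \<omega> $ j\<bar> \<le> norm (f \<omega>) * norm (g \<omega>)"
      unfolding abs_mult using a by (intro mult_mono) auto
    also have "\<dots> \<le> (norm (f \<omega>))\<^sup>2 + (norm (g \<omega>))\<^sup>2"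
      using sum_squares_bound[of "norm (f \<omega>)" "norm (g \<omega>)"]
        mult_nonneg_nonneg[OF norm_ge_zero[of "f \<omega>"] norm_ge_zero[of "g \<omega>"]]
      unfolding power2_eq_square by linarith
    finally show "norm (f \<omega> $ i * g \<omega> $ j) \<le> norm ((norm (f \<omega>))\<^sup>2 + (norm (g \<omega>))\<^sup>2)" by simp
  qed
qed

lemma exp_bilin:
  fixes f :: "'a \<Rightarrow> real^'m" and g :: "'a \<Rightarrow> real^'n" and X :: "real^'n^'m"
  assumes fm: "f \<in> borel_measurable M" and fi: "integrable M (\<lambda>\<omega>. (norm (f \<omega>))\<^sup>2)"
    and gm: "g \<in> borel_measurable M" and gi: "integrable M (\<lambda>\<omega>. (norm (g \<omega>))\<^sup>2)"
  shows "integrable M (\<lambda>\<omega>. f \<omega> \<bullet> (X *v g \<omega>))"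
    and "integral\<^sup>L M (\<lambda>\<omega>. f \<omega> \<bullet> (X *v g \<omega>)) = frob X (cross_cov M f g)"
proof -
  have eq: "(\<lambda>\<omega>. f \<omega> \<bullet> (X *v g \<omega>)) = (\<lambda>\<omega>. \<Sum>i\<in>UNIV. \<Sum>j\<in>UNIV. X$i$j * (f \<omega> $ i * g \<omega> $ j))"
    by (simp add: inner_vec_def matrix_vector_mult_def sum_distrib_left mult_ac)
  have ci: "\<And>i j. integrable M (\<lambda>\<omega>. f \<omega> $ i * g \<omega> $ j)" using comp_int[OF assms] .
  show "integrable M (\<lambda>\<omega>. f \<omega> \<bullet> (X *v g \<omega>))" unfolding eq
    using ci by (intro Bochner_Integration.integrable_sum Bochner_Integration.integrable_mult_right) auto
  show "integral\<^sup>L M (\<lambda>\<omega>. f \<omega> \<bullet> (X *v g \<omega>)) = frob X (cross_cov M f g)" unfolding eq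
    using ci by (simp add: Bochner_Integration.integral_sum frob_def cross_cov_def)
qed

lemma cov_psd:
  fixes v :: "'a \<Rightarrow> real^'n"
  assumes vm: "v \<in> borel_measurable M" and vi: "integrable M (\<lambda>\<omega>. (norm (v \<omega>))\<^sup>2)"
  shows "psd_mat (cross_cov M v v)"
  unfolding psd_mat_def
proof (intro conjI allI)
  show "transpose (cross_cov M v v) = cross_cov M v v"
    by (simp add: cross_cov_def transpose_def vec_eq_iff mult.commute)
  fix z :: "real^'n"
  have "z \<bullet> (cross_cov M v v *v z) = frob (outer z z) (cross_cov M v v)" by (simp add: frob_outer)
  also have "\<dots> = integral\<^sup>L M (\<lambda>\<omega>. v \<omega> \<bullet> (outer z z *v v \<omega>))"
    using exp_bilin(2)[OF vm vi vm vi] by simp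
  also have "\<dots> \<ge> 0" by (intro integral_nonneg_AE AE_I2) (simp add: outer_mult_vec inner_commute)
  finally show "0 \<le> z \<bullet> (cross_cov M v v *v z)" .
qed

lemma norm_expand:
  fixes a :: "real^'m"
  shows "(norm (a - sum b K))\<^sup>2 = (norm a)\<^sup>2 - 2 * (\<Sum>k\<in>K. a \<bullet> b k) + (\<Sum>k\<in>K. \<Sum>l\<in>K. b k \<bullet> b l)"
  unfolding power2_norm_eq_inner
  by (simp add: inner_diff_left inner_diff_right inner_sum_left inner_sum_right inner_commute)

lemma dot_mats: "(B *v x) \<bullet> (B' *v y) = x \<bullet> ((transpose B ** B') *v y)"
  for B :: "real^'n^'m" and B' :: "real^'k^'m"
proof -
  have "(B *v x) \<bullet> (B' *v y) = (x v* transpose B) \<bullet> (B' *v y)" by simp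
  also have "\<dots> = x \<bullet> (transpose B *v (B' *v y))" by (rule dot_lmul_matrix)
  finally show ?thesis by (simp add: matrix_vector_mul_assoc)
qed

lemma general:
  fixes M :: "'a measure" and x :: "'a \<Rightarrow> real^'m" and vv :: "nat \<Rightarrow> 'a \<Rightarrow> real^'n"
    and \<eta> :: "nat \<Rightarrow> nat" and s :: "nat \<Rightarrow> nat \<Rightarrow> real"
    and u :: "nat \<Rightarrow> nat \<Rightarrow> real^'m" and w :: "nat \<Rightarrow> nat \<Rightarrow> real^'n" and K :: "nat set"
  assumes xm: "x \<in> borel_measurable M" and xi: "integrable M (\<lambda>\<omega>. (norm (x \<omega>))\<^sup>2)"
    and fin: "finite K"
    and vm: "\<And>k. k \<in> K \<Longrightarrow> vv k \<in> borel_measurable M"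
    and vi: "\<And>k. k \<in> K \<Longrightarrow> integrable M (\<lambda>\<omega>. (norm (vv k \<omega>))\<^sup>2)"
    and orth: "\<And>k l. k \<in> K \<Longrightarrow> l \<in> K \<Longrightarrow> k \<noteq> l \<Longrightarrow> cross_cov M (vv k) (vv l) = 0"
    and svd: "\<And>k. k \<in> K \<Longrightarrow>
           is_svd (cross_cov M x (vv k) ** pinv (msqrt (cross_cov M (vv k) (vv k)))) (s k) (u k) (w k)"
    and eta: "\<And>k. k \<in> K \<Longrightarrow> \<eta> k \<le> min CARD('m) CARD('n)"
  shows "integral\<^sup>L M (\<lambda>\<omega>. (norm (x \<omega> -
            (\<Sum>k\<in>K. (svd_trunc (s k) (u k) (w k) (\<eta> k) **
                          pinv (msqrt (cross_cov M (vv k) (vv k)))) *v vv k \<omega>)))\<^sup>2)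
       = integral\<^sup>L M (\<lambda>\<omega>. (norm (x \<omega>))\<^sup>2) - (\<Sum>k\<in>K. \<Sum>j<\<eta> k. (s k j)\<^sup>2)"
proof -
  define B where "B k = svd_trunc (s k) (u k) (w k) (\<eta> k) ** pinv (msqrt (cross_cov M (vv k) (vv k)))" for k
  define \<sigma> where "\<sigma> k = (\<Sum>j<\<eta> k. (s k j)\<^sup>2)" for k
  define a where "a \<omega> = (norm (x \<omega>))\<^sup>2" for \<omega>
  define b where "b \<omega> = (\<Sum>k\<in>K. x \<omega> \<bullet> (B k *v vv k \<omega>))" for \<omega>
  define c where "c \<omega> = (\<Sum>k\<in>K. \<Sum>l\<in>K. vv k \<omega> \<bullet> ((transpose (B k) ** B l) *v vv l \<omega>))" for \<omega>
  have pt: "(norm (x \<omega> - (\<Sum>k\<in>K. B k *v vv k \<omega>)))\<^sup>2 = a \<omega> - 2 * b \<omega> + c \<omega>" for \<omega>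
    unfolding a_def b_def c_def norm_expand dot_mats ..
  have i1: "integrable M (\<lambda>\<omega>. x \<omega> \<bullet> (B k *v vv k \<omega>))" if "k \<in> K" for k
    using exp_bilin(1)[OF xm xi vm[OF that] vi[OF that]] .
  have i2: "integrable M (\<lambda>\<omega>. vv k \<omega> \<bullet> ((transpose (B k) ** B l) *v vv l \<omega>))" if "k \<in> K" "l \<in> K" for k l
    using exp_bilin(1)[OF vm[OF that(1)] vi[OF that(1)] vm[OF that(2)] vi[OF that(2)]] .
  have ia: "integrable M a" using xi unfolding a_def .
  have ib: "integrable M b" unfolding b_def using i1 by (intro Bochner_Integration.integrable_sum) auto
  have ic: "integrable M c" unfolding c_def using i2
    by (intro Bochner_Integration.integrable_sum) auto
  have "integral\<^sup>L M (\<lambda>\<omega>. a \<omega> - 2 * b \<omega> + c \<omega>) = integral\<^sup>L M a - 2 * integral\<^sup>L M b + integral\<^sup>L M c"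
    using ia ib ic by simp
  moreover have "integral\<^sup>L M b = (\<Sum>k\<in>K. \<sigma> k)"
  proof -
    have "integral\<^sup>L M b = (\<Sum>k\<in>K. integral\<^sup>L M (\<lambda>\<omega>. x \<omega> \<bullet> (B k *v vv k \<omega>)))"
      unfolding b_def using i1 by (simp add: Bochner_Integration.integral_sum)
    also have "\<dots> = (\<Sum>k\<in>K. \<sigma> k)"
    proof (intro sum.cong refl)
      fix k assume k: "k \<in> K"
      have "integral\<^sup>L M (\<lambda>\<omega>. x \<omega> \<bullet> (B k *v vv k \<omega>)) = frob (B k) (cross_cov M x (vv k))"
        using exp_bilin(2)[OF xm xi vm[OF k] vi[OF k]] .
      also have "\<dots> = \<sigma> k" unfolding B_def \<sigma>_def
        by (rule key(1)[OF cov_psd[OF vm[OF k] vi[OF k]] svd[OF k] eta[OF k]])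
      finally show "integral\<^sup>L M (\<lambda>\<omega>. x \<omega> \<bullet> (B k *v vv k \<omega>)) = \<sigma> k" .
    qed
    finally show ?thesis .
  qed
  moreover have "integral\<^sup>L M c = (\<Sum>k\<in>K. \<sigma> k)"
  proof -
    have "integral\<^sup>L M c = (\<Sum>k\<in>K. \<Sum>l\<in>K. integral\<^sup>L M (\<lambda>\<omega>. vv k \<omega> \<bullet> ((transpose (B k) ** B l) *v vv l \<omega>)))"
      unfolding c_def using i2
      by (simp add: Bochner_Integration.integral_sum Bochner_Integration.integrable_sum)
    also have "\<dots> = (\<Sum>k\<in>K. \<sigma> k)"
    proof (intro sum.cong refl)
      fix k assume k: "k \<in> K"
      have "(\<Sum>l\<in>K. integral\<^sup>L M (\<lambda>\<omega>. vv k \<omega> \<bullet> ((transpose (B k) ** B l) *v vv l \<omega>)))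
          = (\<Sum>l\<in>K. if l = k then \<sigma> k else 0)"
      proof (intro sum.cong refl)
        fix l assume l: "l \<in> K"
        have "integral\<^sup>L M (\<lambda>\<omega>. vv k \<omega> \<bullet> ((transpose (B k) ** B l) *v vv l \<omega>))
           = frob (transpose (B k) ** B l) (cross_cov M (vv k) (vv l))"
          using exp_bilin(2)[OF vm[OF k] vi[OF k] vm[OF l] vi[OF l]] .
        also have "\<dots> = (if l = k then \<sigma> k else 0)"
        proof (cases "l = k")
          case True
          then show ?thesis unfolding B_def \<sigma>_def
            using key(2)[OF cov_psd[OF vm[OF k] vi[OF k]] svd[OF k] eta[OF k]] by simp
        next
          case False
          then show ?thesis using orth[OF k l] by simp
        qed
        finally show "integral\<^sup>L M (\<lambda>\<omega>. vv k \<omega> \<bullet> ((transpose (B k) ** B l) *v vv l \<omega>))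
           = (if l = k then \<sigma> k else 0)" .
      qed
      also have "\<dots> = \<sigma> k" using fin k by (simp add: sum.delta)
      finally show "(\<Sum>l\<in>K. integral\<^sup>L M (\<lambda>\<omega>. vv k \<omega> \<bullet> ((transpose (B k) ** B l) *v vv l \<omega>))) = \<sigma> k" .
    qed
    finally show ?thesis .
  qed
  ultimately have "integral\<^sup>L M (\<lambda>\<omega>. (norm (x \<omega> - (\<Sum>k\<in>K. B k *v vv k \<omega>)))\<^sup>2)
      = integral\<^sup>L M a - (\<Sum>k\<in>K. \<sigma> k)"
    unfolding pt by simp
  then show ?thesis unfolding B_def \<sigma>_def a_def .
qed


theorem corollary5:
  fixes M :: "'a measure"
    and x :: "'a \<Rightarrow> real^'m" and y :: "'a \<Rightarrow> real^'n"
    and vv :: "nat \<Rightarrow> 'a \<Rightarrow> real^'n"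
    and p :: nat and \<eta> :: "nat \<Rightarrow> nat"
    and s :: "nat \<Rightarrow> nat \<Rightarrow> real"
    and u :: "nat \<Rightarrow> nat \<Rightarrow> real^'m" and w :: "nat \<Rightarrow> nat \<Rightarrow> real^'n"
  assumes "prob_space M"
    and "x \<in> borel_measurable M" and "integrable M (\<lambda>\<omega>. (norm (x \<omega>))\<^sup>2)"
    and "y \<in> borel_measurable M" and "integrable M (\<lambda>\<omega>. (norm (y \<omega>))\<^sup>2)"
    and "integral\<^sup>L M x = 0" and "integral\<^sup>L M y = 0"
    and "1 \<le> p"
    and "vv 1 = y"
    and "\<And>k. k \<in> {1..p} \<Longrightarrow> vv k \<in> borel_measurable M"
    and "\<And>k. k \<in> {1..p} \<Longrightarrow> integrable M (\<lambda>\<omega>. (norm (vv k \<omega>))\<^sup>2)"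
    and "\<And>k. k \<in> {1..p} \<Longrightarrow> integral\<^sup>L M (vv k) = 0"
    and "\<And>i j. i \<in> {1..p} \<Longrightarrow> j \<in> {1..p} \<Longrightarrow> i \<noteq> j \<Longrightarrow> cross_cov M (vv i) (vv j) = 0"
    and "(\<Sum>k=1..p. \<eta> k) \<le> min CARD('m) CARD('n)"
    and "\<And>k. k \<in> {1..p} \<Longrightarrow>
           is_svd (cross_cov M x (vv k) ** pinv (msqrt (cross_cov M (vv k) (vv k))))
                  (s k) (u k) (w k)"
  shows "integral\<^sup>L M (\<lambda>\<omega>. (norm (x \<omega> -
            (\<Sum>k=1..p. (svd_trunc (s k) (u k) (w k) (\<eta> k) **
                          pinv (msqrt (cross_cov M (vv k) (vv k)))) *v vv k \<omega>)))\<^sup>2)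
       = integral\<^sup>L M (\<lambda>\<omega>. (norm (x \<omega> -
            (svd_trunc (s 1) (u 1) (w 1) (\<eta> 1) ** pinv (msqrt (cross_cov M y y))) *v y \<omega>))\<^sup>2)
         - (\<Sum>k=2..p. \<Sum>j<\<eta> k. (s k j)\<^sup>2)"
proof -
  have fin: "finite {1..p}" by simp
  have eta: "\<eta> k \<le> min CARD('m) CARD('n)" if "k \<in> {1..p}" for k
    using member_le_sum[OF that _ fin, of \<eta>] assms(14) by simp
  have one: "1 \<in> {1..p}" using assms(8) by simp
  have G1: "integral\<^sup>L M (\<lambda>\<omega>. (norm (x \<omega> -
            (\<Sum>k=1..p. (svd_trunc (s k) (u k) (w k) (\<eta> k) **
                          pinv (msqrt (cross_cov M (vv k) (vv k)))) *v vv k \<omega>)))\<^sup>2)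
       = integral\<^sup>L M (\<lambda>\<omega>. (norm (x \<omega>))\<^sup>2) - (\<Sum>k=1..p. \<Sum>j<\<eta> k. (s k j)\<^sup>2)"
    by (rule general[OF assms(2,3) fin assms(10,11,13,15) eta]) auto
  have G2: "integral\<^sup>L M (\<lambda>\<omega>. (norm (x \<omega> -
            (\<Sum>k\<in>{1}. (svd_trunc (s k) (u k) (w k) (\<eta> k) **
                          pinv (msqrt (cross_cov M (vv k) (vv k)))) *v vv k \<omega>)))\<^sup>2)
       = integral\<^sup>L M (\<lambda>\<omega>. (norm (x \<omega>))\<^sup>2) - (\<Sum>k\<in>{1}. \<Sum>j<\<eta> k. (s k j)\<^sup>2)"
    by (rule general[OF assms(2,3)]) (use one assms(10,11,15) eta in auto)
  have split: "(\<Sum>k=1..p. \<Sum>j<\<eta> k. (s k j)\<^sup>2) = (\<Sum>j<\<eta> 1. (s 1 j)\<^sup>2) + (\<Sum>k=2..p. \<Sum>j<\<eta> k. (s k j)\<^sup>2)"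
    using sum.atLeast_Suc_atMost[OF assms(8), of "\<lambda>k. \<Sum>j<\<eta> k. (s k j)\<^sup>2"] by (simp add: numeral_2_eq_2)
  show ?thesis using G1 G2 split assms(9) by simp
qed

end
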